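(* Let $n\ge2$, $\omega\in(0,1)$, and let $B_1,\dots,B_n$ be independent lognormal service times with $m_i=\mathbb E\ln B_i$, $s_i^2=\mathrm{Var}\ln B_i$, where $m_1\le\cdots\le m_n$ and $s_1^2\le\cdots\le s_n^2$; let $\mu_i=\mathbb EB_i$. Use the identity sequence with schedule $\boldsymbol x=(1+\alpha)\boldsymbol\mu$, where $\alpha=\frac1{\sqrt{2\omega}}\sqrt{\exp(s_{n-1}^2)-1}$. Then, with $Z$ standard normal and $Q_Z$ its quantile function, $$r_\omega=\frac{C(\mathrm{Id},\boldsymbol x,\omega)}{\min\{C(\tau,\boldsymbol y,\omega):\tau\in\mathsf S_n,\boldsymbol y\in\mathbb R_+^n\}}\le\frac{2\omega\alpha}{(1-\omega)\,\mathbb P(Z\ge Q_Z(1-\omega)-s_1)-\omega\,\mathbb P(Z\le Q_Z(1-\omega)-s_1)}.$$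
   Context: Appointment model: a sequence is a permutation $\tau\in\mathsf S_n$ of $\{1,\dots,n\}$, $\tau(i)$ being the patient in slot $i$. A schedule is $\boldsymbol y=(y_1,\dots,y_n)$, $y_j$ the interarrival time between patient $j$ and the next patient. Waiting and idle times: $W_1=I_1=0$, $W_{i+1}=(W_i+B_{\tau(i)}-y_{\tau(i)})^+$, $I_{i+1}=(W_i+B_{\tau(i)}-y_{\tau(i)})^-$, $a^+=\max\{0,a\}$, $a^-=\max\{0,-a\}$. Cost $C(\tau,\boldsymbol y,\omega)=\omega\sum_{i=1}^n\mathbb EI_i+(1-\omega)\sum_{i=1}^n\mathbb EW_i$. $\mathrm{Id}$ is the identity permutation. $Q_Z(y)=\inf\{x:y\le\mathbb P(Z\le x)\}$. *)

theory Defs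
  imports "HOL-Probability.Probability" "HOL-Combinatorics.Permutations"
begin

text \<open>Waiting times. b j is the realized service time of patient j, y j the interarrival
time after patient j, tau i the patient in slot i (slots 1..n).
wt tau y b k is W_(k+1), so wt ... 0 = W_1 = 0 and
W_(k+2) = (W_(k+1) + B_(tau(k+1)) - y_(tau(k+1)))^+.\<close>
fun wt :: "(nat \<Rightarrow> nat) \<Rightarrow> (nat \<Rightarrow> real) \<Rightarrow> (nat \<Rightarrow> real) \<Rightarrow> nat \<Rightarrow> real" where
  "wt tau y b 0 = 0"
| "wt tau y b (Suc k) = max 0 (wt tau y b k + b (tau (Suc k)) - y (tau (Suc k)))"

fun idl :: "(nat \<Rightarrow> nat) \<Rightarrow> (nat \<Rightarrow> real) \<Rightarrow> (nat \<Rightarrow> real) \<Rightarrow> nat \<Rightarrow> real" where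
  "idl tau y b 0 = 0"
| "idl tau y b (Suc k) = max 0 (- (wt tau y b k + b (tau (Suc k)) - y (tau (Suc k))))"

definition cost :: "'a measure \<Rightarrow> (nat \<Rightarrow> 'a \<Rightarrow> real) \<Rightarrow> nat \<Rightarrow> (nat \<Rightarrow> nat)
    \<Rightarrow> (nat \<Rightarrow> real) \<Rightarrow> real \<Rightarrow> real" where
  "cost M B n tau y w =
     w * (\<Sum>k<n. integral\<^sup>L M (\<lambda>x. idl tau y (\<lambda>j. B j x) k))
     + (1 - w) * (\<Sum>k<n. integral\<^sup>L M (\<lambda>x. wt tau y (\<lambda>j. B j x) k))"

definition lognormal :: "'a measure \<Rightarrow> ('a \<Rightarrow> real) \<Rightarrow> real \<Rightarrow> real \<Rightarrow> bool" where
  "lognormal M X m s \<longleftrightarrow> 0 < s \<and> X \<in> borel_measurable M \<and> (AE x in M. 0 < X x) \<and>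
     distributed M lborel (\<lambda>x. ln (X x)) (normal_density m s)"

definition std_normal :: "real measure" where
  "std_normal = density lborel std_normal_density"

definition QZ :: "real \<Rightarrow> real" where
  "QZ p = Inf {x. p \<le> measure std_normal {..x}}"

end

theory Submission
  imports Defs
begin

definition Phi :: "real \<Rightarrow> real" where "Phi a = measure std_normal {..a}"

lemma Phi_integral: "Phi a = (\<integral>x. std_normal_density x * indicator {..a} x \<partial>lborel)"
proof -
  have "Phi a = integral\<^sup>L std_normal (indicator {..a})"
    by (simp add: Phi_def std_normal_def)
  also have "\<dots> = (\<integral>x. std_normal_density x * indicator {..a} x \<partial>lborel)"
    unfolding std_normal_def by (subst integral_density) auto
  finally show ?thesis .
qed

lemma normal_ind:
  assumes s: "0 < s"
  shows "(\<integral>u. normal_density m s u * indicator {..t} u \<partial>lborel) = Phi ((t - m) / s)"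
proof -
  have "(\<integral>u. normal_density m s u * indicator {..t} u \<partial>lborel)
      = \<bar>s\<bar> *\<^sub>R (\<integral>x. normal_density m s (m + s * x) * indicator {..t} (m + s * x) \<partial>lborel)"
    using s by (intro lborel_integral_real_affine) auto
  also have "\<dots> = (\<integral>x. std_normal_density x * indicator {..(t-m)/s} x \<partial>lborel)"
  proof -
    have "\<And>x. s * (normal_density m s (m + s * x) * indicator {..t} (m + s * x)) = std_normal_density x * indicator {..(t-m)/s} x"
    proof -
      fix x
      have i: "indicator {..t} (m + s * x) = (indicator {..(t-m)/s} x :: real)"
        using s by (auto simp: indicator_def field_simps)
      have "s * normal_density m s (m + s * x) = std_normal_density x"
        using s by (simp add: normal_density_def real_sqrt_mult power2_eq_square field_simps)
      then show "?thesis x" by (simp add: i)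
    qed
    then show ?thesis using s by (simp add: integral_mult_right_zero[symmetric] mult.assoc)
  qed
  finally show ?thesis by (simp add: Phi_integral)
qed

lemma tilt:
  assumes s: "0 < s"
  shows "normal_density m s u * exp (c*u) = exp (c*m + c\<^sup>2* s\<^sup>2/2) * normal_density (m + c* s\<^sup>2) s u"
proof -
  have "-(u - m)\<^sup>2/ (2 * s\<^sup>2) + c*u = (c*m + c\<^sup>2* s\<^sup>2/2) + (-(u - (m + c* s\<^sup>2))\<^sup>2/ (2 * s\<^sup>2))"
    using s by (simp add: field_simps power2_eq_square)
  then have "exp (-(u - m)\<^sup>2/ (2 * s\<^sup>2)) * exp (c*u) = exp (c*m + c\<^sup>2* s\<^sup>2/2) * exp (-(u - (m + c* s\<^sup>2))\<^sup>2/ (2 * s\<^sup>2))"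
    by (metis exp_add)
  then show ?thesis unfolding normal_density_def by (simp add: ac_simps)
qed

lemma normal_tilt_ind:
  assumes s: "0 < s"
  shows "integrable lborel (\<lambda>u. normal_density m s u * (exp (c*u) * indicator {..t} u))"
    and "(\<integral>u. normal_density m s u * (exp (c*u) * indicator {..t} u) \<partial>lborel)
           = exp (c*m + c\<^sup>2* s\<^sup>2/2) * Phi ((t - m - c* s\<^sup>2)/s)"
proof -
  have eq: "(\<lambda>u. normal_density m s u * (exp (c*u) * indicator {..t} u)) =
       (\<lambda>u. exp (c*m + c\<^sup>2* s\<^sup>2/2) * (normal_density (m + c* s\<^sup>2) s u * indicator {..t} u))"
    using tilt[OF s] by (auto simp: fun_eq_iff mult.assoc[symmetric])
  have "integrable lborel (\<lambda>u. normal_density (m + c* s\<^sup>2) s u * indicator {..t} u)"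
    using integrable_mult_indicator[of "{..t}" lborel "normal_density (m + c* s\<^sup>2) s"]
      integrable_normal_density[OF s, of "m + c * s\<^sup>2"] by (simp add: mult.commute)
  then show "integrable lborel (\<lambda>u. normal_density m s u * (exp (c*u) * indicator {..t} u))"
    unfolding eq by simp
  show "(\<integral>u. normal_density m s u * (exp (c*u) * indicator {..t} u) \<partial>lborel)
           = exp (c*m + c\<^sup>2* s\<^sup>2/2) * Phi ((t - m - c* s\<^sup>2)/s)"
    unfolding eq using normal_ind[OF s, of "m + c* s\<^sup>2" t] by (simp add: diff_diff_eq)
qed

lemma normal_tilt:
  assumes s: "0 < s"
  shows "integrable lborel (\<lambda>u. normal_density m s u * exp (c*u))"
    and "(\<integral>u. normal_density m s u * exp (c*u) \<partial>lborel) = exp (c*m + c\<^sup>2* s\<^sup>2/2)"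
proof -
  have eq: "(\<lambda>u. normal_density m s u * exp (c*u)) =
       (\<lambda>u. exp (c*m + c\<^sup>2* s\<^sup>2/2) * normal_density (m + c* s\<^sup>2) s u)"
    using tilt[OF s] by (auto simp: fun_eq_iff)
  show "integrable lborel (\<lambda>u. normal_density m s u * exp (c*u))"
    unfolding eq using integrable_normal_density[OF s, of "m + c * s\<^sup>2"] by simp
  show "(\<integral>u. normal_density m s u * exp (c*u) \<partial>lborel) = exp (c*m + c\<^sup>2* s\<^sup>2/2)"
    unfolding eq using integral_normal_density[OF s, of "m + c * s\<^sup>2"] by simp
qed

context prob_space begin

lemma logn_basic:
  assumes "lognormal M X m s"
  shows "0 < s" "X \<in> borel_measurable M" "AE x in M. 0 < X x"
    "distributed M lborel (\<lambda>x. ln (X x)) (normal_density m s)"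
  using assms unfolding lognormal_def by auto

lemma logn_tilt_ind:
  assumes L: "lognormal M X m s"
  shows "integrable M (\<lambda>x. exp (c * ln (X x)) * indicator {..t} (ln (X x)))"
    and "(\<integral>x. exp (c * ln (X x)) * indicator {..t} (ln (X x)) \<partial>M)
           = exp (c*m + c\<^sup>2* s\<^sup>2/2) * Phi ((t - m - c* s\<^sup>2)/s)"
proof -
  note b = logn_basic[OF L]
  have g: "(\<lambda>u. exp (c*u) * indicator {..t} u :: real) \<in> borel_measurable lborel" by simp
  show "integrable M (\<lambda>x. exp (c * ln (X x)) * indicator {..t} (ln (X x)))"
    using distributed_integrable[OF b(4) g] normal_tilt_ind(1)[OF b(1)] by simp
  show "(\<integral>x. exp (c * ln (X x)) * indicator {..t} (ln (X x)) \<partial>M)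
           = exp (c*m + c\<^sup>2* s\<^sup>2/2) * Phi ((t - m - c* s\<^sup>2)/s)"
    using distributed_integral[OF b(4) g] normal_tilt_ind(2)[OF b(1)] by simp
qed

lemma logn_tilt:
  assumes L: "lognormal M X m s"
  shows "integrable M (\<lambda>x. exp (c * ln (X x)))"
    and "(\<integral>x. exp (c * ln (X x)) \<partial>M) = exp (c*m + c\<^sup>2* s\<^sup>2/2)"
proof -
  note b = logn_basic[OF L]
  have g: "(\<lambda>u. exp (c*u) :: real) \<in> borel_measurable lborel" by simp
  show "integrable M (\<lambda>x. exp (c * ln (X x)))"
    using distributed_integrable[OF b(4) g] normal_tilt(1)[OF b(1)] by simp
  show "(\<integral>x. exp (c * ln (X x)) \<partial>M) = exp (c*m + c\<^sup>2* s\<^sup>2/2)"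
    using distributed_integral[OF b(4) g] normal_tilt(2)[OF b(1)] by simp
qed

lemma logn_moments:
  assumes L: "lognormal M X m s"
  shows "integrable M X" "expectation X = exp (m + s\<^sup>2/2)"
    "integrable M (\<lambda>x. (X x)\<^sup>2)" "expectation (\<lambda>x. (X x)\<^sup>2) = exp (2*m + 2* s\<^sup>2)"
    "integrable M (\<lambda>x. X x * indicator {..t} (ln (X x)))"
    "expectation (\<lambda>x. X x * indicator {..t} (ln (X x))) = exp (m + s\<^sup>2/2) * Phi ((t - m - s\<^sup>2)/s)"
    "integrable M (\<lambda>x. indicator {..t} (ln (X x)) :: real)"
    "expectation (\<lambda>x. indicator {..t} (ln (X x)) :: real) = Phi ((t - m)/s)"
proof -
  note b = logn_basic[OF L]
  have ae1: "AE x in M. exp (1 * ln (X x)) = X x" using b(3) by eventually_elim simp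
  have ae2: "AE x in M. exp (2 * ln (X x)) = (X x)\<^sup>2" using b(3)
    by eventually_elim (simp add: exp_of_nat_mult[where n=2, simplified])
  have ae3: "AE x in M. exp (1 * ln (X x)) * indicator {..t} (ln (X x)) = X x * indicator {..t} (ln (X x))"
    using b(3) by eventually_elim simp
  have m[measurable]: "X \<in> borel_measurable M" by (rule b(2))
  show "integrable M X" using integrable_cong_AE[OF _ _ ae1] logn_tilt(1)[OF L, of 1] by simp
  show "expectation X = exp (m + s\<^sup>2/2)" using integral_cong_AE[OF _ _ ae1] logn_tilt(2)[OF L, of 1] by simp
  show "integrable M (\<lambda>x. (X x)\<^sup>2)" using integrable_cong_AE[OF _ _ ae2] logn_tilt(1)[OF L, of 2] by simp
  show "expectation (\<lambda>x. (X x)\<^sup>2) = exp (2*m + 2* s\<^sup>2)" using integral_cong_AE[OF _ _ ae2] logn_tilt(2)[OF L, of 2]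
    by (simp add: power2_eq_square)
  show "integrable M (\<lambda>x. X x * indicator {..t} (ln (X x)))"
    using integrable_cong_AE[OF _ _ ae3] logn_tilt_ind(1)[OF L, of 1] by simp
  show "expectation (\<lambda>x. X x * indicator {..t} (ln (X x))) = exp (m + s\<^sup>2/2) * Phi ((t - m - s\<^sup>2)/s)"
    using integral_cong_AE[OF _ _ ae3] logn_tilt_ind(2)[OF L, of 1] by simp
  show "integrable M (\<lambda>x. indicator {..t} (ln (X x)) :: real)"
    using logn_tilt_ind(1)[OF L, of 0] by simp
  show "expectation (\<lambda>x. indicator {..t} (ln (X x)) :: real) = Phi ((t - m)/s)"
    using logn_tilt_ind(2)[OF L, of 0] by simp
qed

end

lemma std_normal_rd: "real_distribution std_normal"
proof -
  have "prob_space (density lborel (\<lambda>x. ennreal (std_normal_density x)))"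
    by (rule prob_space_normal_density) simp
  then show ?thesis
    unfolding real_distribution_def real_distribution_axioms_def std_normal_def by simp
qed

lemma std_normal_prob: "prob_space std_normal"
  using std_normal_rd real_distribution_def by blast

lemma Phi_cdf: "Phi = cdf std_normal"
  by (simp add: fun_eq_iff Phi_def cdf_def)

lemma std_normal_single: "measure std_normal {x} = 0"
proof -
  have "measure std_normal {x} = integral\<^sup>L std_normal (indicator {x})"
    by (simp add: std_normal_def)
  also have "\<dots> = (\<integral>u. std_normal_density u * indicator {x} u \<partial>lborel)"
    unfolding std_normal_def by (subst integral_density) auto
  also have "\<dots> = 0"
    by (rule integral_eq_zero_AE) (auto intro!: eventually_mono[OF AE_lborel_singleton[of x]])
  finally show ?thesis by simp
qed

lemma Phi_cont: "isCont Phi x"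
  unfolding Phi_cdf using finite_borel_measure.isCont_cdf[OF real_distribution.finite_borel_measure_M[OF std_normal_rd]] std_normal_single by simp

lemma Phi_mono: "a \<le> b \<Longrightarrow> Phi a \<le> Phi b"
  unfolding Phi_cdf using finite_borel_measure.cdf_nondecreasing[OF real_distribution.finite_borel_measure_M[OF std_normal_rd]] by simp

lemma Phi_top: "(Phi \<longlongrightarrow> 1) at_top"
  unfolding Phi_cdf using real_distribution.cdf_lim_at_top_prob[OF std_normal_rd] by simp

lemma Phi_bot: "(Phi \<longlongrightarrow> 0) at_bot"
  unfolding Phi_cdf using finite_borel_measure.cdf_lim_at_bot[OF real_distribution.finite_borel_measure_M[OF std_normal_rd]] by simp

lemma Phi_strict:
  assumes "a < b" shows "Phi a < Phi b"
proof -
  define c where "c = std_normal_density (max \<bar>a\<bar> \<bar>b\<bar>)"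
  have cpos: "0 < c" unfolding c_def by (simp add: normal_density_pos)
  have "Phi b = Phi a + (\<integral>x. std_normal_density x * indicator {a<..b} x \<partial>lborel)"
  proof -
    have "(\<lambda>x. std_normal_density x * indicator {..b} x) =
          (\<lambda>x. std_normal_density x * indicator {..a} x + std_normal_density x * indicator {a<..b} x)"
      using assms by (auto simp: fun_eq_iff indicator_def)
    moreover have "integrable lborel (\<lambda>x. std_normal_density x * indicator {..a} x)"
      using integrable_mult_indicator[of "{..a}" lborel std_normal_density] integrable_normal_density[of 1 0]
      by (simp add: mult.commute)
    moreover have "integrable lborel (\<lambda>x. std_normal_density x * indicator {a<..b} x)"
      using integrable_mult_indicator[of "{a<..b}" lborel std_normal_density] integrable_normal_density[of 1 0]
      by (simp add: mult.commute)
    ultimately show ?thesis by (simp add: Phi_integral)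
  qed
  moreover have "c * (b - a) \<le> (\<integral>x. std_normal_density x * indicator {a<..b} x \<partial>lborel)"
  proof -
    have ii: "integrable lborel (indicator {a<..b} :: real \<Rightarrow> real)"
      using assms by (simp add: integrable_indicator_iff emeasure_lborel_Ioc)
    have "c * (b - a) = (\<integral>x. c * indicator {a<..b} x \<partial>lborel)"
      using assms ii by simp
    also have "\<dots> \<le> (\<integral>x. std_normal_density x * indicator {a<..b} x \<partial>lborel)"
    proof (rule integral_mono)
      show "integrable lborel (\<lambda>x. c * indicator {a<..b} x)" using ii by simp
      show "integrable lborel (\<lambda>x. std_normal_density x * indicator {a<..b} x)"
        using integrable_mult_indicator[of "{a<..b}" lborel std_normal_density] integrable_normal_density[of 1 0]
        by (simp add: mult.commute)
      fix x
      show "c * indicator {a<..b} x \<le> std_normal_density x * indicator {a<..b} x"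
      proof (cases "x \<in> {a<..b}")
        case True
        then have "\<bar>x\<bar> \<le> max \<bar>a\<bar> \<bar>b\<bar>" by auto
        then have "x\<^sup>2 \<le> (max \<bar>a\<bar> \<bar>b\<bar>)\<^sup>2"
          by (metis abs_ge_zero power2_abs power_mono)
        then have "exp (- (max \<bar>a\<bar> \<bar>b\<bar>)\<^sup>2 / 2) \<le> exp (- x\<^sup>2 / 2)" by simp
        then show ?thesis using True unfolding c_def std_normal_density_def by (simp add: divide_right_mono)
      qed simp
    qed
    finally show ?thesis .
  qed
  ultimately show ?thesis using cpos assms by (smt (verit) mult_pos_pos)
qed

lemma QZ_Phi:
  assumes "0 < p" "p < 1"
  shows "Phi (QZ p) = p"
proof -
  define S where "S = {x. p \<le> Phi x}"
  have QS: "QZ p = Inf S" unfolding S_def QZ_def Phi_def ..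
  have "eventually (\<lambda>x. p < Phi x) at_top"
    using order_tendstoD(1)[OF Phi_top, of p] assms by simp
  then obtain x0 where x0: "Phi x0 > p"
    by (auto simp: eventually_at_top_linorder)
  have "eventually (\<lambda>x. Phi x < p) at_bot"
    using order_tendstoD(2)[OF Phi_bot, of p] assms by simp
  then obtain x1 where x1: "\<And>x. x \<le> x1 \<Longrightarrow> Phi x < p"
    by (auto simp: eventually_at_bot_linorder)
  have ne: "S \<noteq> {}" using x0 unfolding S_def by (auto intro!: exI[of _ x0])
  have bdd: "bdd_below S"
    unfolding bdd_below_def S_def by (metis mem_Collect_eq not_le x1 less_le_not_le)
  have closed: "closed S" unfolding S_def
    by (intro closed_Collect_le continuous_intros) (auto simp: continuous_on_eq_continuous_at Phi_cont)
  have inS: "Inf S \<in> S" using closed_contains_Inf[OF ne bdd closed] .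
  then have ge: "p \<le> Phi (Inf S)" by (simp add: S_def)
  have le: "Phi (Inf S) \<le> p"
  proof -
    have lim: "(Phi \<longlongrightarrow> Phi (Inf S)) (at_left (Inf S))"
      using Phi_cont[of "Inf S"] by (simp add: isCont_def filterlim_at_split)
    have ev: "eventually (\<lambda>x. Phi x \<le> p) (at_left (Inf S))"
    proof -
      have "eventually (\<lambda>x. x < Inf S) (at_left (Inf S))"
        by (simp add: eventually_at_left_field) (meson lt_ex)
      then show ?thesis
      proof (rule eventually_mono)
        fix x assume "x < Inf S"
        then have "x \<notin> S" using cInf_lower[OF _ bdd] by force
        then show "Phi x \<le> p" by (simp add: S_def)
      qed
    qed
    show ?thesis by (rule tendsto_upperbound[OF lim ev]) simp
  qed
  show ?thesis using ge le QS by simp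
qed

lemma wt_nonneg: "0 \<le> wt tau y b k"
  by (cases k) auto

lemma idl_nonneg: "0 \<le> idl tau y b k"
  by (cases k) auto

lemma wt_cong: "(\<And>i. i \<in> {1..k} \<Longrightarrow> b (tau i) = b' (tau i)) \<Longrightarrow> wt tau y b k = wt tau y b' k"
  by (induction k) auto

lemma wt_bound: "wt tau y b k \<le> (\<Sum>i\<in>{1..k}. \<bar>b (tau i)\<bar> + \<bar>y (tau i)\<bar>)"
proof (induction k)
  case (Suc k)
  have "0 \<le> (\<Sum>i\<in>{1..k}. \<bar>b (tau i)\<bar> + \<bar>y (tau i)\<bar>)" by (intro sum_nonneg) auto
  then show ?case using Suc by (simp add: sum.cl_ivl_Suc)
qed simp

lemma wt_meas_Pi:
  assumes "tau ` {1..k} \<subseteq> A"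
  shows "(\<lambda>f. wt tau y f k) \<in> borel_measurable (PiM A (\<lambda>_. borel))"
  using assms
proof (induction k)
  case 0 then show ?case by simp
next
  case (Suc k)
  then have "tau ` {1..k} \<subseteq> A" "tau (Suc k) \<in> A" by auto
  with Suc.IH have [measurable]: "(\<lambda>f. wt tau y f k) \<in> borel_measurable (PiM A (\<lambda>_. borel))" by simp
  have [measurable]: "(\<lambda>f. f (tau (Suc k))) \<in> borel_measurable (PiM A (\<lambda>_. borel))"
    using \<open>tau (Suc k) \<in> A\<close> by (rule measurable_component_singleton)
  show ?case by simp
qed

context prob_space begin

lemma wt_meas:
  assumes "\<And>i. i \<in> {1..k} \<Longrightarrow> B (tau i) \<in> borel_measurable M"
  shows "(\<lambda>x. wt tau y (\<lambda>j. B j x) k) \<in> borel_measurable M"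
  using assms
proof (induction k)
  case (Suc k)
  then have [measurable]: "(\<lambda>x. wt tau y (\<lambda>j. B j x) k) \<in> borel_measurable M" by simp
  have [measurable]: "B (tau (Suc k)) \<in> borel_measurable M" using Suc.prems by simp
  show ?case by simp
qed simp

lemma idl_meas:
  assumes "\<And>i. i \<in> {1..k} \<Longrightarrow> B (tau i) \<in> borel_measurable M"
  shows "(\<lambda>x. idl tau y (\<lambda>j. B j x) k) \<in> borel_measurable M"
proof (cases k)
  case (Suc k')
  then have [measurable]: "(\<lambda>x. wt tau y (\<lambda>j. B j x) k') \<in> borel_measurable M"
    using assms by (intro wt_meas) auto
  have [measurable]: "B (tau (Suc k')) \<in> borel_measurable M" using assms Suc by simp
  show ?thesis using Suc by simp
qed simp

lemma wt_integrable:
  assumes "\<And>i. i \<in> {1..k} \<Longrightarrow> integrable M (B (tau i))"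
  shows "integrable M (\<lambda>x. wt tau y (\<lambda>j. B j x) k)"
proof -
  have ib: "integrable M (\<lambda>x. \<Sum>i\<in>{1..k}. \<bar>B (tau i) x\<bar> + \<bar>y (tau i)\<bar>)"
    apply (rule Bochner_Integration.integrable_sum)
    apply (rule Bochner_Integration.integrable_add)
     apply (rule integrable_abs)
     apply (erule assms)
    apply (rule integrable_const)
    done
  show ?thesis
  proof (rule Bochner_Integration.integrable_bound[OF ib])
    show "(\<lambda>x. wt tau y (\<lambda>j. B j x) k) \<in> borel_measurable M"
      using assms by (intro wt_meas) auto
    show "AE x in M. norm (wt tau y (\<lambda>j. B j x) k) \<le> norm (\<Sum>i\<in>{1..k}. \<bar>B (tau i) x\<bar> + \<bar>y (tau i)\<bar>)"
    proof (intro AE_I2)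
      fix x
      have "wt tau y (\<lambda>j. B j x) k \<le> (\<Sum>i\<in>{1..k}. \<bar>B (tau i) x\<bar> + \<bar>y (tau i)\<bar>)"
        by (rule wt_bound)
      then show "norm (wt tau y (\<lambda>j. B j x) k) \<le> norm (\<Sum>i\<in>{1..k}. \<bar>B (tau i) x\<bar> + \<bar>y (tau i)\<bar>)"
        using wt_nonneg[of tau y "\<lambda>j. B j x" k] by simp
    qed
  qed
qed

lemma idl_integrable:
  assumes "\<And>i. i \<in> {1..k} \<Longrightarrow> integrable M (B (tau i))"
  shows "integrable M (\<lambda>x. idl tau y (\<lambda>j. B j x) k)"
proof (cases k)
  case (Suc k')
  have i1: "integrable M (\<lambda>x. wt tau y (\<lambda>j. B j x) k')"
    using assms Suc by (intro wt_integrable) auto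
  have i2: "integrable M (B (tau (Suc k')))" using assms Suc by simp
  have "integrable M (\<lambda>x. max 0 (- (wt tau y (\<lambda>j. B j x) k' + B (tau (Suc k')) x - y (tau (Suc k')))))"
    using i1 i2 by (intro integrable_max integrable_minus integrable_diff integrable_add) auto
  then show ?thesis using Suc by simp
qed simp

end

context prob_space begin

lemma wt_indep:
  assumes ind: "indep_vars (\<lambda>_. borel) B I" and sub: "tau ` {1..k} \<subseteq> I" and j: "j \<in> I"
    and nj: "j \<notin> tau ` {1..k}"
  shows "indep_var borel (\<lambda>x. wt tau y (\<lambda>i. B i x) k) borel (B j)"
proof -
  have "indep_var (PiM (tau ` {1..k}) (\<lambda>_. borel)) (\<lambda>\<omega>. restrict (\<lambda>i. B i \<omega>) (tau ` {1..k}))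
                  (PiM {j} (\<lambda>_. borel)) (\<lambda>\<omega>. restrict (\<lambda>i. B i \<omega>) {j})"
    using nj sub j by (intro indep_var_restrict[OF ind]) auto
  then have "indep_var borel ((\<lambda>f. wt tau y f k) \<circ> (\<lambda>\<omega>. restrict (\<lambda>i. B i \<omega>) (tau ` {1..k})))
                  borel ((\<lambda>f. f j) \<circ> (\<lambda>\<omega>. restrict (\<lambda>i. B i \<omega>) {j}))"
    by (rule indep_var_compose) (auto intro: wt_meas_Pi measurable_component_singleton)
  also have "((\<lambda>f. wt tau y f k) \<circ> (\<lambda>\<omega>. restrict (\<lambda>i. B i \<omega>) (tau ` {1..k}))) = (\<lambda>x. wt tau y (\<lambda>i. B i x) k)"
    by (auto simp: fun_eq_iff intro!: wt_cong)
  also have "((\<lambda>f. f j) \<circ> (\<lambda>\<omega>. restrict (\<lambda>i. B i \<omega>) {j})) = B j"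
    by (auto simp: fun_eq_iff)
  finally show ?thesis .
qed

lemma slot_lower:
  assumes L: "lognormal M X m s" and W: "integrable M W" and ind: "indep_var borel W borel X"
    and w: "0 < w" "w < 1"
  shows "exp (m + s\<^sup>2/2) * ((1 - w) - Phi (QZ (1 - w) - s))
     \<le> (\<integral>x. w * max 0 (- (W x + X x - y)) + (1 - w) * max 0 (W x + X x - y) \<partial>M)"
proof -
  note b = logn_basic[OF L]
  define z where "z = QZ (1 - w)"
  have Pz: "Phi z = 1 - w" unfolding z_def using w by (intro QZ_Phi) auto
  define t where "t = m + s * z"
  define h where "h x = (indicator {..t} (ln (X x)) :: real)" for x
  have [measurable]: "X \<in> borel_measurable M" by (rule b(2))
  have hm[measurable]: "h \<in> borel_measurable M" unfolding h_def by simp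
  have Wm[measurable]: "W \<in> borel_measurable M" using W by auto
  have iX: "integrable M X" and EX: "expectation X = exp (m + s\<^sup>2/2)"
    using logn_moments[OF L] by auto
  have ih: "integrable M h" and Eh: "expectation h = 1 - w"
    using logn_moments(7,8)[OF L, of t] b(1) Pz unfolding h_def t_def by auto
  have iXh: "integrable M (\<lambda>x. X x * h x)" and EXh: "expectation (\<lambda>x. X x * h x) = exp (m + s\<^sup>2/2) * Phi (z - s)"
  proof -
    show "integrable M (\<lambda>x. X x * h x)" using logn_moments(5)[OF L, of t] unfolding h_def .
    have "(t - m - s\<^sup>2) / s = z - s" unfolding t_def using b(1) by (simp add: field_simps power2_eq_square)
    then show "expectation (\<lambda>x. X x * h x) = exp (m + s\<^sup>2/2) * Phi (z - s)"
      using logn_moments(6)[OF L, of t] unfolding h_def by simp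
  qed
  have indh: "indep_var borel W borel h"
  proof -
    have "indep_var borel (id \<circ> W) borel ((\<lambda>u. indicator {..t} (ln u) :: real) \<circ> X)"
      by (rule indep_var_compose[OF ind]) auto
    then show ?thesis by (simp add: comp_def h_def[abs_def])
  qed
  have iWh: "integrable M (\<lambda>x. W x * h x)" and EWh: "expectation (\<lambda>x. W x * h x) = expectation W * (1 - w)"
    using indep_var_integrable[OF indh W ih] indep_var_lebesgue_integral[OF indh W ih] Eh by auto
  define R where "R x = (1 - w) * (W x + X x - y) - (W x * h x + X x * h x - y * h x)" for x
  have iR: "integrable M R" unfolding R_def
    using W iX ih iWh iXh by (intro Bochner_Integration.integrable_diff Bochner_Integration.integrable_add integrable_mult_right) auto
  have ER: "expectation R = exp (m + s\<^sup>2/2) * ((1 - w) - Phi (z - s))"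
  proof -
    have "expectation R = (1 - w) * (expectation W + expectation X - y) - (expectation (\<lambda>x. W x * h x) + expectation (\<lambda>x. X x * h x) - y * expectation h)"
      unfolding R_def using W iX ih iWh iXh prob_space
      by (simp add: Bochner_Integration.integral_diff Bochner_Integration.integral_add integrable_diff integrable_add)
    then show ?thesis using EX Eh EXh EWh by (simp add: algebra_simps)
  qed
  have le: "R x \<le> w * max 0 (- (W x + X x - y)) + (1 - w) * max 0 (W x + X x - y)" for x
  proof -
    have h01: "h x = 0 \<or> h x = 1" unfolding h_def by (simp add: indicator_def)
    show ?thesis unfolding R_def using h01 w by (cases "W x + X x - y \<ge> 0") (auto simp: algebra_simps)
  qed
  have "expectation R \<le> (\<integral>x. w * max 0 (- (W x + X x - y)) + (1 - w) * max 0 (W x + X x - y) \<partial>M)"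
  proof (rule integral_mono[OF iR _ le])
    show "integrable M (\<lambda>x. w * max 0 (- (W x + X x - y)) + (1 - w) * max 0 (W x + X x - y))"
      using W iX by (intro Bochner_Integration.integrable_add integrable_mult_right integrable_max integrable_minus integrable_diff) auto
  qed
  then show ?thesis using ER z_def by simp
qed

end

context prob_space begin

lemma alg_king: fixes A w0 c mu e X2 :: real
  shows "(e + X2 + c\<^sup>2 + 2 * (w0 * mu) - 2 * c * w0 - 2 * c * mu) - (A - w0 + (c - mu))\<^sup>2 = (X2 - mu\<^sup>2) + e - 2 * (c - mu) * A - (A - w0)\<^sup>2"
  by (simp add: power2_eq_square algebra_simps)
lemma king_alg: fixes A Bv w0 c mu U2 e X2 W2n I2 :: real
  assumes "Bv = A - w0 + (c - mu)" "U2 = e + X2 + c\<^sup>2 + 2 * (w0 * mu) - 2 * c * w0 - 2 * c * mu"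
    "W2n + I2 = U2" "Bv\<^sup>2 \<le> I2"
  shows "2 * (c - mu) * A \<le> (X2 - mu\<^sup>2) + e - W2n"
proof -
  have h: "U2 - Bv\<^sup>2 = (X2 - mu\<^sup>2) + e - 2 * (c - mu) * A - (A - w0)\<^sup>2"
    unfolding assms(1,2) by (rule alg_king)
  show ?thesis using h assms(3,4) zero_le_power2[of "A - w0"] by linarith
qed

lemma sq_int_bound:
  fixes U f :: "'a \<Rightarrow> real"
  assumes "integrable M (\<lambda>x. (U x)\<^sup>2)" "f \<in> borel_measurable M" "\<And>x. \<bar>f x\<bar> \<le> \<bar>U x\<bar>"
  shows "integrable M (\<lambda>x. (f x)\<^sup>2)"
proof (rule Bochner_Integration.integrable_bound[OF assms(1)])
  show "(\<lambda>x. (f x)\<^sup>2) \<in> borel_measurable M" using assms(2) by simp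
  show "AE x in M. norm ((f x)\<^sup>2) \<le> norm ((U x)\<^sup>2)"
    using assms(3) by (intro AE_I2) (simp add: abs_le_square_iff)
qed

lemma kingman_step:
  fixes W X :: "'a \<Rightarrow> real" and c :: real
  assumes W: "integrable M W" and W2: "integrable M (\<lambda>x. (W x)\<^sup>2)"
    and X: "integrable M X" and X2: "integrable M (\<lambda>x. (X x)\<^sup>2)"
    and ind: "indep_var borel W borel X"
  defines "Wn \<equiv> (\<lambda>x. max 0 (W x + X x - c))" and "In \<equiv> (\<lambda>x. max 0 (- (W x + X x - c)))"
  shows "integrable M Wn" "integrable M In" "integrable M (\<lambda>x. (Wn x)\<^sup>2)" "integrable M (\<lambda>x. (In x)\<^sup>2)"
    "expectation In = expectation Wn - expectation W + (c - expectation X)"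
    "2 * (c - expectation X) * expectation Wn \<le>
       (expectation (\<lambda>x. (X x)\<^sup>2) - (expectation X)\<^sup>2) + expectation (\<lambda>x. (W x)\<^sup>2) - expectation (\<lambda>x. (Wn x)\<^sup>2)"
proof -
  have [measurable]: "W \<in> borel_measurable M" "X \<in> borel_measurable M" using W X by auto
  have WnM[measurable]: "Wn \<in> borel_measurable M" and InM[measurable]: "In \<in> borel_measurable M"
    unfolding Wn_def In_def by auto
  define U where "U x = W x + X x - c" for x
  have iWX: "integrable M (\<lambda>x. W x * X x)" and EWX: "expectation (\<lambda>x. W x * X x) = expectation W * expectation X"
    using indep_var_integrable[OF ind W X] indep_var_lebesgue_integral[OF ind W X] by auto
  have U2: "(\<lambda>x. (U x)\<^sup>2) = (\<lambda>x. (W x)\<^sup>2 + (X x)\<^sup>2 + c\<^sup>2 + 2 * (W x * X x) - 2 * c * W x - 2 * c * X x)"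
    by (auto simp: fun_eq_iff U_def power2_eq_square algebra_simps)
  have iU2: "integrable M (\<lambda>x. (U x)\<^sup>2)" unfolding U2
    using W W2 X X2 iWX by (intro Bochner_Integration.integrable_diff Bochner_Integration.integrable_add integrable_mult_right integrable_const) auto
  have EU2: "expectation (\<lambda>x. (U x)\<^sup>2) = expectation (\<lambda>x. (W x)\<^sup>2) + expectation (\<lambda>x. (X x)\<^sup>2) + c\<^sup>2
      + 2 * (expectation W * expectation X) - 2 * c * expectation W - 2 * c * expectation X"
    unfolding U2 using W W2 X X2 iWX EWX prob_space
    by (simp add: Bochner_Integration.integral_diff Bochner_Integration.integral_add
        Bochner_Integration.integrable_diff Bochner_Integration.integrable_add)
  show iWn: "integrable M Wn" unfolding Wn_def using W X
    by (intro integrable_max Bochner_Integration.integrable_diff Bochner_Integration.integrable_add) auto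
  show iIn: "integrable M In" unfolding In_def using W X
    by (intro integrable_max integrable_minus Bochner_Integration.integrable_diff Bochner_Integration.integrable_add) auto
  show iWn2: "integrable M (\<lambda>x. (Wn x)\<^sup>2)"
    by (rule sq_int_bound[OF iU2 WnM]) (auto simp: Wn_def U_def)
  show iIn2: "integrable M (\<lambda>x. (In x)\<^sup>2)"
    by (rule sq_int_bound[OF iU2 InM]) (auto simp: In_def U_def)
  have "(\<lambda>x. Wn x - In x) = (\<lambda>x. W x + X x - c)" by (auto simp: fun_eq_iff Wn_def In_def)
  then have "expectation (\<lambda>x. Wn x - In x) = expectation (\<lambda>x. W x + X x - c)" by simp
  moreover have "expectation (\<lambda>x. Wn x - In x) = expectation Wn - expectation In"
    using iWn iIn by (rule Bochner_Integration.integral_diff)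
  moreover have "expectation (\<lambda>x. W x + X x - c) = expectation W + expectation X - c"
    using W X prob_space
    by (simp add: Bochner_Integration.integral_diff Bochner_Integration.integral_add Bochner_Integration.integrable_add)
  ultimately have "expectation Wn - expectation In = expectation W + expectation X - c" by simp
  then show EIn: "expectation In = expectation Wn - expectation W + (c - expectation X)" by simp
  have pm: "(max 0 u)\<^sup>2 + (max 0 (- u))\<^sup>2 = u\<^sup>2" for u :: real
    by (cases "u \<ge> 0") auto
  have "(\<lambda>x. (Wn x)\<^sup>2 + (In x)\<^sup>2) = (\<lambda>x. (U x)\<^sup>2)"
    unfolding Wn_def In_def U_def by (rule ext) (rule pm)
  then have sq: "expectation (\<lambda>x. (Wn x)\<^sup>2) + expectation (\<lambda>x. (In x)\<^sup>2) = expectation (\<lambda>x. (U x)\<^sup>2)"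
    using Bochner_Integration.integral_add[OF iWn2 iIn2] by simp
  have jen: "(expectation In)\<^sup>2 \<le> expectation (\<lambda>x. (In x)\<^sup>2)"
  proof -
    define e where "e = expectation In"
    have "0 \<le> expectation (\<lambda>x. (In x - e)\<^sup>2)" by (rule integral_nonneg_AE) auto
    also have "(\<lambda>x. (In x - e)\<^sup>2) = (\<lambda>x. (In x)\<^sup>2 - 2 * e * In x + e\<^sup>2)"
      by (auto simp: fun_eq_iff power2_eq_square algebra_simps)
    also have "expectation \<dots> = expectation (\<lambda>x. (In x)\<^sup>2) - 2 * e * e + e\<^sup>2"
      using iIn iIn2 prob_space unfolding e_def
      by (simp add: Bochner_Integration.integral_diff Bochner_Integration.integral_add
        Bochner_Integration.integrable_diff Bochner_Integration.integrable_add)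
    finally show ?thesis unfolding e_def by (simp add: power2_eq_square)
  qed
  show "2 * (c - expectation X) * expectation Wn \<le>
       (expectation (\<lambda>x. (X x)\<^sup>2) - (expectation X)\<^sup>2) + expectation (\<lambda>x. (W x)\<^sup>2) - expectation (\<lambda>x. (Wn x)\<^sup>2)"
    by (rule king_alg[OF EIn EU2 sq jen])
qed

end

context prob_space begin

lemma ub:
  fixes B :: "nat \<Rightarrow> 'a \<Rightarrow> real" and mu :: "nat \<Rightarrow> real" and al w :: real and n :: nat
  assumes n2: "2 \<le> n" and ind: "indep_vars (\<lambda>_. borel) B {1..n}"
    and iB: "\<And>i. i \<in> {1..n} \<Longrightarrow> integrable M (B i)"
    and iB2: "\<And>i. i \<in> {1..n} \<Longrightarrow> integrable M (\<lambda>x. (B i x)\<^sup>2)"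
    and mu: "\<And>i. mu i = expectation (B i)"
    and mupos: "\<And>i. i \<in> {1..n} \<Longrightarrow> 0 < mu i"
    and mumono: "\<And>i j. 1 \<le> i \<Longrightarrow> i \<le> j \<Longrightarrow> j \<le> n \<Longrightarrow> mu i \<le> mu j"
    and apos: "0 < al" and w: "0 < w" "w < 1"
    and var: "\<And>i. 1 \<le> i \<Longrightarrow> i \<le> n - 1 \<Longrightarrow>
       expectation (\<lambda>x. (B i x)\<^sup>2) - (mu i)\<^sup>2 \<le> 2 * w * al\<^sup>2 * (mu i)\<^sup>2"
  shows "cost M B n id (\<lambda>i. (1 + al) * mu i) w \<le> 2 * w * al * (\<Sum>k<n-1. mu (Suc k))"
proof -
  define xs where "xs i = (1 + al) * mu i" for i
  define W where "W k = (\<lambda>z. wt id xs (\<lambda>j. B j z) k)" for k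
  define I where "I k = (\<lambda>z. idl id xs (\<lambda>j. B j z) k)" for k
  define ew where "ew k = expectation (W k)" for k
  define e where "e k = expectation (\<lambda>z. (W k z)\<^sup>2)" for k
  have W0: "W 0 = (\<lambda>z. 0)" and I0: "I 0 = (\<lambda>z. 0)" by (auto simp: W_def I_def fun_eq_iff)
  have Wsuc: "W (Suc k) = (\<lambda>z. max 0 (W k z + B (Suc k) z - xs (Suc k)))" for k
    by (simp add: W_def fun_eq_iff)
  have Isuc: "I (Suc k) = (\<lambda>z. max 0 (- (W k z + B (Suc k) z - xs (Suc k))))" for k
    by (simp add: W_def I_def fun_eq_iff)
  have indk: "indep_var borel (W k) borel (B (Suc k))" if "k < n" for k
    unfolding W_def using that by (intro wt_indep[OF ind]) auto
  have iW: "integrable M (W k)" if "k < n" for k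
    unfolding W_def using that by (intro wt_integrable iB) auto
  have iW2: "integrable M (\<lambda>z. (W k z)\<^sup>2)" if "k < n" for k
    using that
  proof (induction k)
    case 0 then show ?case by (simp add: W0)
  next
    case (Suc k)
    then have "k < n" by simp
    show ?case unfolding Wsuc
      by (rule kingman_step(3)[OF iW[OF \<open>k < n\<close>] Suc.IH[OF \<open>k < n\<close>] iB iB2 indk[OF \<open>k < n\<close>]])
         (use Suc.prems in auto)
  qed
  have king: "expectation (I (Suc k)) = ew (Suc k) - ew k + al * mu (Suc k) \<and>
     2 * (al * mu (Suc k)) * ew (Suc k) \<le> (expectation (\<lambda>x. (B (Suc k) x)\<^sup>2) - (mu (Suc k))\<^sup>2) + e k - e (Suc k)"
    if "k < n - 1" for k
  proof -
    have k: "k < n" "Suc k \<in> {1..n}" using that by auto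
    have xd: "xs (Suc k) - expectation (B (Suc k)) = al * mu (Suc k)"
      by (simp add: xs_def mu algebra_simps)
    note ks = kingman_step[OF iW[OF k(1)] iW2[OF k(1)] iB[OF k(2)] iB2[OF k(2)] indk[OF k(1)], of "xs (Suc k)"]
    show ?thesis using ks(5,6)[unfolded xd, folded mu] unfolding Isuc Wsuc ew_def e_def by simp
  qed
  have step: "ew (Suc k) \<le> w * al * mu (Suc k) + e k / (2 * al * mu (Suc k)) - e (Suc k) / (2 * al * mu (Suc k))"
    if "k < n - 1" for k
  proof -
    have mp: "0 < mu (Suc k)" using that by (intro mupos) auto
    have v: "expectation (\<lambda>x. (B (Suc k) x)\<^sup>2) - (mu (Suc k))\<^sup>2 \<le> 2 * w * al\<^sup>2 * (mu (Suc k))\<^sup>2"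
      using that by (intro var) auto
    have "2 * (al * mu (Suc k)) * ew (Suc k) \<le> 2 * w * al\<^sup>2 * (mu (Suc k))\<^sup>2 + e k - e (Suc k)"
      using king[OF that] v by linarith
    then have "ew (Suc k) \<le> (2 * w * al\<^sup>2 * (mu (Suc k))\<^sup>2 + e k - e (Suc k)) / (2 * al * mu (Suc k))"
      using mp apos by (simp add: pos_le_divide_eq mult.commute mult.left_commute)
    also have "\<dots> = w * al * mu (Suc k) + e k / (2 * al * mu (Suc k)) - e (Suc k) / (2 * al * mu (Suc k))"
      using mp apos by (simp add: field_simps power2_eq_square)
    finally show ?thesis .
  qed
  have e0: "e 0 = 0" by (simp add: e_def W0)
  have enn: "0 \<le> e k" for k unfolding e_def by (rule integral_nonneg_AE) auto
  have wnn: "0 \<le> ew k" for k unfolding ew_def W_def by (rule integral_nonneg_AE) (auto simp: wt_nonneg)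
  have tel: "(\<Sum>k<N. ew (Suc k)) + (if N = 0 then 0 else e N / (2 * al * mu N)) \<le> w * al * (\<Sum>k<N. mu (Suc k))"
    if "N \<le> n - 1" for N
    using that
  proof (induction N)
    case 0 then show ?case by simp
  next
    case (Suc N)
    then have N: "N < n - 1" by simp
    have mp: "0 < mu (Suc N)" using N by (intro mupos) auto
    have c: "e N / (2 * al * mu (Suc N)) \<le> (if N = 0 then 0 else e N / (2 * al * mu N))"
    proof (cases "N = 0")
      case True then show ?thesis by (simp add: e0)
    next
      case False
      then have "0 < mu N" "mu N \<le> mu (Suc N)" using N by (auto intro!: mupos mumono)
      then have "e N / (2 * al * mu (Suc N)) \<le> e N / (2 * al * mu N)"
        using apos enn[of N] by (intro divide_left_mono mult_left_mono) auto
      then show ?thesis using False by simp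
    qed
    show ?case using Suc.IH N step[OF N] c by (simp add: distrib_left; linarith)
  qed
  have eterm: "0 \<le> (if N = 0 then 0 else e N / (2 * al * mu N))" if "N \<le> n - 1" for N
    using that enn mupos apos by (auto intro!: divide_nonneg_pos)
  have sumw: "(\<Sum>k<n-1. ew (Suc k)) \<le> w * al * (\<Sum>k<n-1. mu (Suc k))"
    using tel[of "n-1"] eterm[of "n-1"] by simp
  have n1: "n = Suc (n - 1)" using n2 by simp
  have "cost M B n id (\<lambda>i. (1 + al) * mu i) w = w * (\<Sum>k<n. expectation (I k)) + (1 - w) * (\<Sum>k<n. ew k)"
    unfolding cost_def xs_def[symmetric] I_def ew_def W_def ..
  also have "\<dots> = w * (\<Sum>k<n-1. expectation (I (Suc k))) + (1 - w) * (\<Sum>k<n-1. ew (Suc k))"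
    by (subst (1 2) n1, simp only: sum.lessThan_Suc_shift) (simp add: I0 ew_def W0)
  also have "\<dots> = (\<Sum>k<n-1. w * al * mu (Suc k) + ew (Suc k) - w * ew k)"
  proof -
    have pk: "w * expectation (I (Suc k)) + (1 - w) * ew (Suc k) = w * al * mu (Suc k) + ew (Suc k) - w * ew k"
      if "k \<in> {..<n-1}" for k
    proof -
      have h: "expectation (I (Suc k)) = ew (Suc k) - ew k + al * mu (Suc k)" using king[of k] that by simp
      show ?thesis unfolding h by (simp add: algebra_simps)
    qed
    have "w * (\<Sum>k<n-1. expectation (I (Suc k))) + (1 - w) * (\<Sum>k<n-1. ew (Suc k))
        = (\<Sum>k<n-1. w * expectation (I (Suc k)) + (1 - w) * ew (Suc k))"
      by (simp add: sum_distrib_left sum.distrib)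
    also have "\<dots> = (\<Sum>k<n-1. w * al * mu (Suc k) + ew (Suc k) - w * ew k)"
      by (rule sum.cong[OF refl pk])
    finally show ?thesis .
  qed
  also have "\<dots> \<le> (\<Sum>k<n-1. w * al * mu (Suc k) + ew (Suc k))"
    using w wnn by (intro sum_mono) simp
  also have "\<dots> = w * al * (\<Sum>k<n-1. mu (Suc k)) + (\<Sum>k<n-1. ew (Suc k))"
    by (simp add: sum.distrib sum_distrib_left)
  also have "\<dots> \<le> 2 * w * al * (\<Sum>k<n-1. mu (Suc k))"
    using sumw by (simp add: algebra_simps)
  finally show ?thesis .
qed

end

lemma perm_sum_ge:
  fixes g :: "nat \<Rightarrow> real"
  assumes perm: "tau permutes {1..n}" and n: "1 \<le> n"
    and mono: "\<And>i. i \<in> {1..n} \<Longrightarrow> g i \<le> g n"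
  shows "(\<Sum>k<n-1. g (Suc k)) \<le> (\<Sum>k<n-1. g (tau (Suc k)))"
proof -
  have n1: "n = Suc (n - 1)" using n by simp
  have split: "sum h {1..n} = sum h {1..n-1} + h n" for h :: "nat \<Rightarrow> real"
    by (subst n1, subst sum.cl_ivl_Suc) (use n in auto)
  have "sum (g \<circ> tau) {1..n} = sum g {1..n}" using sum.permute[OF perm, of g] by simp
  then have e: "sum (g \<circ> tau) {1..n-1} + g (tau n) = sum g {1..n-1} + g n"
    using split[of "g \<circ> tau"] split[of g] by simp
  have "tau n \<in> {1..n}" using permutes_in_image[OF perm] n by auto
  then have "g (tau n) \<le> g n" by (rule mono)
  then have "sum g {1..n-1} \<le> sum (g \<circ> tau) {1..n-1}" using e by linarith
  then show ?thesis
    using sum.atLeast1_atMost_eq[of g "n-1"] sum.atLeast1_atMost_eq[of "g \<circ> tau" "n-1"] by simp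
qed

context prob_space begin

lemma lb:
  fixes B :: "nat \<Rightarrow> 'a \<Rightarrow> real" and m s :: "nat \<Rightarrow> real" and w :: real and n :: nat
  assumes n2: "2 \<le> n" and ind: "indep_vars (\<lambda>_. borel) B {1..n}"
    and L: "\<And>i. i \<in> {1..n} \<Longrightarrow> lognormal M (B i) (m i) (s i)"
    and w: "0 < w" "w < 1"
    and perm: "tau permutes {1..n}"
    and sord: "\<And>i. i \<in> {1..n} \<Longrightarrow> s 1 \<le> s i"
    and mumono: "\<And>i. i \<in> {1..n} \<Longrightarrow> exp (m i + (s i)\<^sup>2/2) \<le> exp (m n + (s n)\<^sup>2/2)"
  shows "((1 - w) - Phi (QZ (1 - w) - s 1)) * (\<Sum>k<n-1. exp (m (Suc k) + (s (Suc k))\<^sup>2/2)) \<le> cost M B n tau y w"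
proof -
  define mu where "mu i = exp (m i + (s i)\<^sup>2/2)" for i
  define D where "D = (1 - w) - Phi (QZ (1 - w) - s 1)"
  define W where "W k = (\<lambda>z. wt tau y (\<lambda>j. B j z) k)" for k
  define I where "I k = (\<lambda>z. idl tau y (\<lambda>j. B j z) k)" for k
  have s1: "0 < s 1" using logn_basic(1)[OF L[of 1]] n2 by auto
  have Dpos: "0 < D"
  proof -
    have "Phi (QZ (1 - w) - s 1) < Phi (QZ (1 - w))" using s1 by (intro Phi_strict) simp
    then show ?thesis unfolding D_def using QZ_Phi[of "1 - w"] w by simp
  qed
  have tin: "tau i \<in> {1..n}" if "i \<in> {1..n}" for i using permutes_in_image[OF perm] that by auto
  have iB: "integrable M (B i)" if "i \<in> {1..n}" for i using logn_moments(1)[OF L[OF that]] .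
  have slot: "mu (tau (Suc k)) * D \<le> w * expectation (I (Suc k)) + (1 - w) * expectation (W (Suc k))"
    if k: "k < n - 1" for k
  proof -
    define j where "j = tau (Suc k)"
    have j: "j \<in> {1..n}" unfolding j_def using k by (intro tin) auto
    have iWk: "integrable M (W k)" unfolding W_def using k by (intro wt_integrable iB tin) auto
    have indk: "indep_var borel (W k) borel (B j)"
      unfolding W_def j_def
    proof (rule wt_indep[OF ind])
      show "tau ` {1..k} \<subseteq> {1..n}" using k tin by auto
      show "tau (Suc k) \<in> {1..n}" using k by (intro tin) auto
      show "tau (Suc k) \<notin> tau ` {1..k}"
        using permutes_inj[OF perm] by (auto simp: inj_eq)
    qed
    have sl: "mu j * ((1 - w) - Phi (QZ (1 - w) - s j))
        \<le> (\<integral>x. w * max 0 (- (W k x + B j x - y j)) + (1 - w) * max 0 (W k x + B j x - y j) \<partial>M)"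
      unfolding mu_def by (rule slot_lower[OF L[OF j] iWk indk w])
    have "Phi (QZ (1 - w) - s j) \<le> Phi (QZ (1 - w) - s 1)" using sord[OF j] by (intro Phi_mono) simp
    then have "mu j * D \<le> mu j * ((1 - w) - Phi (QZ (1 - w) - s j))"
      unfolding D_def mu_def by (intro mult_left_mono) auto
    also note sl
    also have "(\<integral>x. w * max 0 (- (W k x + B j x - y j)) + (1 - w) * max 0 (W k x + B j x - y j) \<partial>M)
        = w * expectation (I (Suc k)) + (1 - w) * expectation (W (Suc k))"
    proof -
      have iI: "integrable M (I (Suc k))" unfolding I_def using k by (intro idl_integrable iB tin) auto
      have iW: "integrable M (W (Suc k))" unfolding W_def using k by (intro wt_integrable iB tin) auto
      have eI: "I (Suc k) = (\<lambda>x. max 0 (- (W k x + B j x - y j)))" by (simp add: I_def W_def j_def fun_eq_iff)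
      have eW: "W (Suc k) = (\<lambda>x. max 0 (W k x + B j x - y j))" by (simp add: W_def j_def fun_eq_iff)
      show ?thesis using iI iW unfolding eI eW by simp
    qed
    finally show ?thesis unfolding j_def .
  qed
  have n1: "n = Suc (n - 1)" using n2 by simp
  have "D * (\<Sum>k<n-1. mu (Suc k)) \<le> D * (\<Sum>k<n-1. mu (tau (Suc k)))"
    using Dpos perm_sum_ge[OF perm, of mu] n2 mumono unfolding mu_def by (intro mult_left_mono) auto
  also have "\<dots> = (\<Sum>k<n-1. mu (tau (Suc k)) * D)" by (simp add: sum_distrib_left mult.commute)
  also have "\<dots> \<le> (\<Sum>k<n-1. w * expectation (I (Suc k)) + (1 - w) * expectation (W (Suc k)))"
    by (intro sum_mono slot) auto
  also have "\<dots> = w * (\<Sum>k<n. expectation (I k)) + (1 - w) * (\<Sum>k<n. expectation (W k))"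
    by (subst (1 2) n1, simp only: sum.lessThan_Suc_shift) (simp add: I_def W_def sum_distrib_left sum.distrib)
  also have "\<dots> = cost M B n tau y w" unfolding cost_def I_def W_def ..
  finally show ?thesis unfolding D_def mu_def .
qed

end

lemma std_normal_ge: "measure std_normal {q..} = 1 - Phi q"
proof -
  interpret P: prob_space std_normal by (rule std_normal_prob)
  have sp: "space std_normal = UNIV" by (simp add: std_normal_def)
  have ev: "A \<in> sets std_normal" if "A \<in> sets borel" for A using that by (simp add: std_normal_def)
  have "measure std_normal (space std_normal - {..q}) = 1 - measure std_normal {..q}"
    by (rule P.prob_compl) (simp add: ev)
  moreover have "space std_normal - {..q} = {q<..}" by (auto simp: sp)
  ultimately have a: "measure std_normal {q<..} = 1 - Phi q" by (simp add: Phi_def)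
  have "measure std_normal ({q} \<union> {q<..}) = measure std_normal {q} + measure std_normal {q<..}"
    by (rule P.finite_measure_Union) (auto simp: ev)
  moreover have "{q} \<union> {q<..} = {q..}" by auto
  ultimately show ?thesis using a std_normal_single by simp
qed

lemma std_normal_le: "measure std_normal {..q} = Phi q" by (simp add: Phi_def)

theorem theorem5p2:
  fixes M :: "'a measure" and B :: "nat \<Rightarrow> 'a \<Rightarrow> real"
    and m s :: "nat \<Rightarrow> real" and n :: nat and \<omega> :: real
  assumes "prob_space M"
    and "n \<ge> 2"
    and "0 < \<omega>" and "\<omega> < 1"
    and "prob_space.indep_vars M (\<lambda>_. borel) B {1..n}"
    and "\<And>i. i \<in> {1..n} \<Longrightarrow> lognormal M (B i) (m i) (s i)"
    and "\<And>i j. 1 \<le> i \<Longrightarrow> i \<le> j \<Longrightarrow> j \<le> n \<Longrightarrow> m i \<le> m j"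
    and "\<And>i j. 1 \<le> i \<Longrightarrow> i \<le> j \<Longrightarrow> j \<le> n \<Longrightarrow> (s i)\<^sup>2 \<le> (s j)\<^sup>2"
  shows
    "(let \<mu> = (\<lambda>i. integral\<^sup>L M (B i));
          \<alpha> = 1 / sqrt (2 * \<omega>) * sqrt (exp ((s (n - 1))\<^sup>2) - 1);
          x = (\<lambda>i. (1 + \<alpha>) * \<mu> i);
          q = QZ (1 - \<omega>) - s 1
      in cost M B n id x \<omega> /
           (INF (\<tau>, y) \<in> {(\<tau>, y). \<tau> permutes {1..n} \<and> (\<forall>j\<in>{1..n}. 0 \<le> y j)}. cost M B n \<tau> y \<omega>)
         \<le> 2 * \<omega> * \<alpha> /
           ((1 - \<omega>) * measure std_normal {q..} - \<omega> * measure std_normal {..q}))"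
proof -
  interpret P: prob_space M by (rule assms(1))
  note n2 = assms(2) and w = assms(3,4) and ind = assms(5) and L = assms(6)
    and mmono = assms(7) and smono = assms(8)
  define mu where "mu i = integral\<^sup>L M (B i)" for i
  define al where "al = 1 / sqrt (2 * \<omega>) * sqrt (exp ((s (n - 1))\<^sup>2) - 1)"
  define q where "q = QZ (1 - \<omega>) - s 1"
  define D where "D = (1 - \<omega>) - Phi (QZ (1 - \<omega>) - s 1)"
  define S where "S = (\<Sum>k<n-1. exp (m (Suc k) + (s (Suc k))\<^sup>2/2))"
  define Set where "Set = {(\<tau>, y). \<tau> permutes {1..n} \<and> (\<forall>j\<in>{1..n}. 0 \<le> (y::nat\<Rightarrow>real) j)}"
  have spos: "0 < s i" if "i \<in> {1..n}" for i using P.logn_basic(1)[OF L[OF that]] .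
  have mu_eq: "mu i = exp (m i + (s i)\<^sup>2/2)" if "i \<in> {1..n}" for i
    unfolding mu_def using P.logn_moments(2)[OF L[OF that]] .
  have expmono: "exp (m i + (s i)\<^sup>2/2) \<le> exp (m j + (s j)\<^sup>2/2)" if "1 \<le> i" "i \<le> j" "j \<le> n" for i j
    using mmono[OF that] smono[OF that] by simp
  have S_eq: "S = (\<Sum>k<n-1. mu (Suc k))" unfolding S_def by (intro sum.cong refl) (auto simp: mu_eq)
  have Spos: "0 < S"
  proof -
    have "0 \<in> {..<n-1}" using n2 by simp
    then have "{..<n-1} \<noteq> {}" by blast
    then show ?thesis unfolding S_def by (intro sum_pos) auto
  qed
  have Dpos: "0 < D"
  proof -
    have "Phi (QZ (1 - \<omega>) - s 1) < Phi (QZ (1 - \<omega>))" using spos[of 1] n2 by (intro Phi_strict) simp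
    then show ?thesis unfolding D_def using QZ_Phi[of "1 - \<omega>"] w by simp
  qed
  have den: "(1 - \<omega>) * measure std_normal {q..} - \<omega> * measure std_normal {..q} = D"
    unfolding std_normal_ge std_normal_le D_def q_def by (simp add: algebra_simps)
  have sn1: "0 < s (n - 1)" using n2 by (intro spos) auto
  have E1: "1 < exp ((s (n - 1))\<^sup>2)" using sn1 by simp
  have alpos: "0 < al" unfolding al_def using E1 w by simp
  have al2: "2 * \<omega> * al\<^sup>2 = exp ((s (n - 1))\<^sup>2) - 1"
    unfolding al_def using E1 w by (simp add: power_mult_distrib power_divide real_sqrt_pow2)
  have UB: "cost M B n id (\<lambda>i. (1 + al) * mu i) \<omega> \<le> 2 * \<omega> * al * S"
  proof -
    have "cost M B n id (\<lambda>i. (1 + al) * mu i) \<omega> \<le> 2 * \<omega> * al * (\<Sum>k<n-1. mu (Suc k))"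
    proof (rule P.ub[OF n2 ind _ _ mu_def _ _ alpos w])
      show "integrable M (B i)" if "i \<in> {1..n}" for i using P.logn_moments(1)[OF L[OF that]] .
      show "integrable M (\<lambda>x. (B i x)\<^sup>2)" if "i \<in> {1..n}" for i using P.logn_moments(3)[OF L[OF that]] .
      show "0 < mu i" if "i \<in> {1..n}" for i using mu_eq[OF that] by simp
      show "mu i \<le> mu j" if "1 \<le> i" "i \<le> j" "j \<le> n" for i j
        using mu_eq[of i] mu_eq[of j] expmono[OF that] that by simp
      show "integral\<^sup>L M (\<lambda>x. (B i x)\<^sup>2) - (mu i)\<^sup>2 \<le> 2 * \<omega> * al\<^sup>2 * (mu i)\<^sup>2"
        if "1 \<le> i" "i \<le> n - 1" for i
      proof -
        have i: "i \<in> {1..n}" using that by auto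
        have e2: "integral\<^sup>L M (\<lambda>x. (B i x)\<^sup>2) = (mu i)\<^sup>2 * exp ((s i)\<^sup>2)"
        proof -
          have a: "2 * m i + 2 * (s i)\<^sup>2 = (m i + (s i)\<^sup>2/2) + (m i + (s i)\<^sup>2/2) + (s i)\<^sup>2" by simp
          have "integral\<^sup>L M (\<lambda>x. (B i x)\<^sup>2) = exp (2 * m i + 2 * (s i)\<^sup>2)"
            using P.logn_moments(4)[OF L[OF i]] .
          also have "\<dots> = exp (m i + (s i)\<^sup>2/2) * exp (m i + (s i)\<^sup>2/2) * exp ((s i)\<^sup>2)"
            unfolding a exp_add ..
          also have "\<dots> = (mu i)\<^sup>2 * exp ((s i)\<^sup>2)" unfolding mu_eq[OF i] power2_eq_square ..
          finally show ?thesis .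
        qed
        have "(s i)\<^sup>2 \<le> (s (n - 1))\<^sup>2" using that by (intro smono) auto
        then have "exp ((s i)\<^sup>2) - 1 \<le> exp ((s (n - 1))\<^sup>2) - 1" by simp
        then have "(mu i)\<^sup>2 * (exp ((s i)\<^sup>2) - 1) \<le> (mu i)\<^sup>2 * (exp ((s (n - 1))\<^sup>2) - 1)"
          by (intro mult_left_mono) auto
        then show ?thesis unfolding e2 al2 by (simp add: algebra_simps)
      qed
    qed
    then show ?thesis unfolding S_eq .
  qed
  have LB: "D * S \<le> cost M B n tau y \<omega>" if "(tau, y) \<in> Set" for tau y
  proof -
    have perm: "tau permutes {1..n}" using that by (simp add: Set_def)
    show ?thesis unfolding D_def S_def
    proof (rule P.lb[OF n2 ind L w perm])
      show "s 1 \<le> s i" if "i \<in> {1..n}" for i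
      proof -
        have "(s 1)\<^sup>2 \<le> (s i)\<^sup>2" using that by (intro smono) auto
        then show ?thesis using spos[OF that] power2_le_imp_le[of "s 1" "s i"] by simp
      qed
      show "exp (m i + (s i)\<^sup>2/2) \<le> exp (m n + (s n)\<^sup>2/2)" if "i \<in> {1..n}" for i
        using that by (intro expmono) auto
    qed auto
  qed
  have ne: "Set \<noteq> {}"
  proof -
    have "(id, \<lambda>_. 0) \<in> Set" unfolding Set_def by (auto intro: permutes_id)
    then show ?thesis by blast
  qed
  define Inf where "Inf = (INF (\<tau>, y) \<in> Set. cost M B n \<tau> y \<omega>)"
  have InfGe: "D * S \<le> Inf" unfolding Inf_def
    using ne LB by (intro cINF_greatest) auto
  have DSpos: "0 < D * S" using Dpos Spos by simp
  have "cost M B n id (\<lambda>i. (1 + al) * mu i) \<omega> / Inf \<le> 2 * \<omega> * al * S / Inf"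
    using UB InfGe DSpos by (intro divide_right_mono) auto
  also have "\<dots> \<le> 2 * \<omega> * al * S / (D * S)"
    using InfGe DSpos w alpos Spos by (intro divide_left_mono) auto
  also have "\<dots> = 2 * \<omega> * al / D" using Spos by simp
  finally have main: "cost M B n id (\<lambda>i. (1 + al) * mu i) \<omega> / Inf \<le> 2 * \<omega> * al / D" .
  show ?thesis
    unfolding Let_def using main
    unfolding den[unfolded q_def, symmetric] Inf_def Set_def al_def mu_def by simp
qed

end
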